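(* Let $X$ be a nontrivial real Hausdorff locally convex space and $f\in\Gamma(X)$. Then (a) $f$ is directionally coercive if and only if $0\in\operatorname{qi}\overline{\operatorname{dom}f^{\ast}}$; (b) $f$ is essentially directionally coercive if and only if $\operatorname{qi}\overline{\operatorname{dom}f^{\ast}}\neq\emptyset$.
   Context: $X^{\ast}$ is the topological dual of $X$ endowed with the weak$^{\ast}$ topology (so $\overline{\operatorname{dom}f^{\ast}}$ is the weak$^{\ast}$ closure); $\langle x,x^{\ast}\rangle=x^{\ast}(x)$. $\Gamma(X)$: proper lower semicontinuous convex functions; $f^{\ast}(x^{\ast})=\sup_x(\langle x,x^{\ast}\rangle-f(x))$, $\operatorname{dom}f^{\ast}=\{f^{\ast}<\infty\}$. For convex $B\subset X^{\ast}$, $\operatorname{qi}B=\{b\in B:\text{weak}^{\ast}\text{ closure of }\mathbb{R}_+(B-b)=X^{\ast}\}$. $f$ is directionally coercive if $\lim_{t\to\infty}f(x+tu)=\infty$ for all $x\in X$, $u\in X\setminus\{0\}$; essentially directionally coercive if $f-x^{\ast}$ is directionally coercive for some $x^{\ast}\in X^{\ast}$. *)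

theory Defs
  imports "HOL-Analysis.Analysis"
begin

text \<open>Hausdorffness is the class t2_space.\<close>
definition locally_convex_tvs :: "('a::{real_vector,topological_space}) itself \<Rightarrow> bool" where
  "locally_convex_tvs _ \<longleftrightarrow>
     continuous_on UNIV (\<lambda>p::'a \<times> 'a. fst p + snd p) \<and>
     continuous_on UNIV (\<lambda>p::real \<times> 'a. fst p *\<^sub>R snd p) \<and>
     (\<forall>U::'a set. open U \<and> 0 \<in> U \<longrightarrow> (\<exists>V. open V \<and> convex V \<and> 0 \<in> V \<and> V \<subseteq> U))"

definition topdual :: "('a::{real_vector,topological_space} \<Rightarrow> real) set" where
  "topdual = {\<phi>. linear \<phi> \<and> continuous_on UNIV \<phi>}"

definition wstar_closure :: "('a::{real_vector,topological_space} \<Rightarrow> real) set \<Rightarrow> ('a \<Rightarrow> real) set" where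
  "wstar_closure B = {\<phi> \<in> topdual. \<forall>F e. finite F \<and> e > 0 \<longrightarrow>
       (\<exists>b\<in>B. \<forall>x\<in>F. \<bar>b x - \<phi> x\<bar> < e)}"

definition qi :: "('a::{real_vector,topological_space} \<Rightarrow> real) set \<Rightarrow> ('a \<Rightarrow> real) set" where
  "qi B = {b \<in> B. wstar_closure {(\<lambda>x. t * (c x - b x)) | t c. t \<ge> 0 \<and> c \<in> B} = topdual}"

definition GammaX :: "('a::{real_vector,topological_space} \<Rightarrow> ereal) set" where
  "GammaX = {f. (\<forall>x. f x \<noteq> -\<infinity>) \<and> (\<exists>x. f x \<noteq> \<infinity>)
       \<and> (\<forall>c::real. closed {x. f x \<le> ereal c})
       \<and> (\<forall>x y. \<forall>t::real. 0 \<le> t \<and> t \<le> 1 \<longrightarrow>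
              f ((1 - t) *\<^sub>R x + t *\<^sub>R y) \<le> ereal (1 - t) * f x + ereal t * f y)}"

definition fconj :: "('a::{real_vector,topological_space} \<Rightarrow> ereal) \<Rightarrow> ('a \<Rightarrow> real) \<Rightarrow> ereal" where
  "fconj f \<phi> = (SUP x. ereal (\<phi> x) - f x)"

definition dom_conj :: "('a::{real_vector,topological_space} \<Rightarrow> ereal) \<Rightarrow> ('a \<Rightarrow> real) set" where
  "dom_conj f = {\<phi> \<in> topdual. fconj f \<phi> < \<infinity>}"

definition dir_coercive :: "('a::{real_vector,topological_space} \<Rightarrow> ereal) \<Rightarrow> bool" where
  "dir_coercive f \<longleftrightarrow> (\<forall>x u. u \<noteq> 0 \<longrightarrow> ((\<lambda>t::real. f (x + t *\<^sub>R u)) \<longlongrightarrow> \<infinity>) at_top)"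

definition ess_dir_coercive :: "('a::{real_vector,topological_space} \<Rightarrow> ereal) \<Rightarrow> bool" where
  "ess_dir_coercive f \<longleftrightarrow> (\<exists>\<phi>\<in>topdual. dir_coercive (\<lambda>x. f x - ereal (\<phi> x)))"

end

theory Submission
  imports Defs "HOL-Library.Function_Algebras"
begin

definition sublin :: "('v::real_vector \<Rightarrow> real) \<Rightarrow> bool" where
  "sublin p \<longleftrightarrow> (\<forall>x y. p (x + y) \<le> p x + p y) \<and> (\<forall>t>0. \<forall>x. p (t *\<^sub>R x) \<le> t * p x)"

lemma sublin_add: "sublin p \<Longrightarrow> p (x + y) \<le> p x + p y"
  by (simp add: sublin_def)

lemma sublin_scale: "sublin p \<Longrightarrow> t > 0 \<Longrightarrow> p (t *\<^sub>R x) \<le> t * p x"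
  by (simp add: sublin_def)

lemma sublin_zero: assumes "sublin p" shows "p 0 = 0"
proof -
  have "p 0 \<le> 2 * p 0" using sublin_scale[OF assms, of 2 0] by simp
  moreover have "p 0 \<le> (1/2) * p 0" using sublin_scale[OF assms, of "1/2" 0] by simp
  ultimately show ?thesis by linarith
qed

lemma sublin_neg: assumes "sublin p" shows "- p (- x) \<le> p x"
  using sublin_add[OF assms, of x "-x"] sublin_zero[OF assms] by simp

lemma sublin_scale_eq: assumes "sublin p" "t \<ge> 0" shows "p (t *\<^sub>R x) = t * p x"
proof (cases "t = 0")
  case True then show ?thesis using sublin_zero[OF assms(1)] by simp
next
  case False
  then have t: "t > 0" using assms by simp
  have "p x = p ((1/t) *\<^sub>R (t *\<^sub>R x))" using t by simp
  also have "\<dots> \<le> (1/t) * p (t *\<^sub>R x)" using sublin_scale[OF assms(1), of "1/t" "t *\<^sub>R x"] t by simp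
  finally have "t * p x \<le> p (t *\<^sub>R x)" using t by (simp add: field_simps)
  then show ?thesis using sublin_scale[OF assms(1) t, of x] by linarith
qed

definition shiftinf :: "('v::real_vector \<Rightarrow> real) \<Rightarrow> 'v \<Rightarrow> real \<Rightarrow> 'v \<Rightarrow> real" where
  "shiftinf p a k x = (INF t\<in>{0..}. p (x + t *\<^sub>R a) - t * k)"

lemma shiftinf_lb:
  assumes "sublin p" "k \<le> p a" "t \<ge> 0"
  shows "- p (- x) \<le> p (x + t *\<^sub>R a) - t * k"
proof -
  have "p (t *\<^sub>R a) \<le> p (x + t *\<^sub>R a) + p (-x)"
    using sublin_add[OF assms(1), of "x + t *\<^sub>R a" "-x"] by simp
  moreover have "p (t *\<^sub>R a) = t * p a" using sublin_scale_eq assms by blast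
  moreover have "t * k \<le> t * p a" using assms by (simp add: mult_left_mono)
  ultimately show ?thesis by linarith
qed

lemma shiftinf_bdd:
  assumes "sublin p" "k \<le> p a"
  shows "bdd_below ((\<lambda>t. p (x + t *\<^sub>R a) - t * k) ` {0..})"
  using shiftinf_lb[OF assms] by (auto intro!: bdd_belowI2)

lemma shiftinf_le:
  assumes "sublin p" "k \<le> p a" "t \<ge> 0"
  shows "shiftinf p a k x \<le> p (x + t *\<^sub>R a) - t * k"
  unfolding shiftinf_def using shiftinf_bdd[OF assms(1,2)] assms(3)
  by (intro cINF_lower) auto

lemma shiftinf_ge:
  assumes "\<And>t. t \<ge> 0 \<Longrightarrow> c \<le> p (x + t *\<^sub>R a) - t * k"
  shows "c \<le> shiftinf p a k x"
  unfolding shiftinf_def using assms by (intro cINF_greatest) auto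

lemma shiftinf_props:
  assumes p: "sublin p" and k: "k \<le> p a"
  shows "sublin (shiftinf p a k)" "\<And>x. shiftinf p a k x \<le> p x" "shiftinf p a k (-a) \<le> -k"
proof -
  let ?q = "shiftinf p a k"
  show "?q x \<le> p x" for x using shiftinf_le[OF p k, of 0 x] by simp
  show "?q (-a) \<le> -k" using shiftinf_le[OF p k, of 1 "-a"] sublin_zero[OF p] by simp
  show "sublin ?q"
    unfolding sublin_def
  proof (intro conjI allI impI)
    fix x y
    have "?q (x + y) - (p (y + t *\<^sub>R a) - t * k) \<le> ?q x" if t: "t \<ge> 0" for t
    proof (rule shiftinf_ge)
      fix s :: real assume s: "s \<ge> 0"
      have "?q (x + y) \<le> p ((x + y) + (s + t) *\<^sub>R a) - (s + t) * k"
        using shiftinf_le[OF p k] s t by simp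
      also have "p ((x + y) + (s + t) *\<^sub>R a) \<le> p (x + s *\<^sub>R a) + p (y + t *\<^sub>R a)"
        using sublin_add[OF p, of "x + s *\<^sub>R a" "y + t *\<^sub>R a"]
        by (simp add: algebra_simps scaleR_add_left)
      finally show "?q (x + y) - (p (y + t *\<^sub>R a) - t * k) \<le> p (x + s *\<^sub>R a) - s * k"
        by (simp add: algebra_simps)
    qed
    then have "?q (x + y) - ?q x \<le> p (y + t *\<^sub>R a) - t * k" if "t \<ge> 0" for t
      using that by force
    then have "?q (x + y) - ?q x \<le> ?q y" by (intro shiftinf_ge) auto
    then show "?q (x + y) \<le> ?q x + ?q y" by simp
  next
    fix t :: real and x assume t: "t > 0"
    have "?q (t *\<^sub>R x) / t \<le> ?q x"
    proof (rule shiftinf_ge)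
      fix s :: real assume s: "s \<ge> 0"
      have "?q (t *\<^sub>R x) \<le> p (t *\<^sub>R x + (t * s) *\<^sub>R a) - (t * s) * k"
        using shiftinf_le[OF p k] s t by simp
      also have "p (t *\<^sub>R x + (t * s) *\<^sub>R a) = p (t *\<^sub>R (x + s *\<^sub>R a))"
        by (simp add: scaleR_add_right)
      also have "\<dots> \<le> t * p (x + s *\<^sub>R a)" using sublin_scale[OF p t] .
      finally show "?q (t *\<^sub>R x) / t \<le> p (x + s *\<^sub>R a) - s * k"
        using t by (simp add: field_simps)
    qed
    then show "?q (t *\<^sub>R x) \<le> t * ?q x" using t by (simp add: field_simps)
  qed
qed

definition epiS :: "('v \<Rightarrow> real) \<Rightarrow> ('v \<times> real) set" where
  "epiS q = {(x, r). q x \<le> r}"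

lemma epiS_sub: "epiS q1 \<subseteq> epiS q2 \<longleftrightarrow> (\<forall>x. q2 x \<le> q1 x)"
proof
  assume "epiS q1 \<subseteq> epiS q2"
  then show "\<forall>x. q2 x \<le> q1 x" unfolding epiS_def by blast
next
  assume "\<forall>x. q2 x \<le> q1 x"
  then show "epiS q1 \<subseteq> epiS q2" unfolding epiS_def by (auto intro: order_trans)
qed

lemma sublin_linear:
  assumes m: "sublin m" and neg: "\<And>a. m (-a) \<le> - m a"
  shows "linear m"
proof -
  have mn: "m (-a) = - m a" for a using neg[of a] sublin_neg[OF m, of a] by simp
  show ?thesis
  proof (rule linearI)
    fix x y
    have "m (x + y) \<le> m x + m y" using sublin_add[OF m] .
    moreover have "m (-(x + y)) \<le> m (-x) + m (-y)" by (metis minus_add_distrib sublin_add[OF m])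
    ultimately show "m (x + y) = m x + m y" using mn[of "x+y"] mn[of x] mn[of y] by linarith
  next
    fix c :: real and x
    show "m (c *\<^sub>R x) = c *\<^sub>R m x"
    proof (cases "c \<ge> 0")
      case True then show ?thesis using sublin_scale_eq[OF m] by simp
    next
      case False
      have "m (c *\<^sub>R x) = m ((-c) *\<^sub>R (-x))" by simp
      also have "\<dots> = (-c) * m (-x)" by (rule sublin_scale_eq[OF m]) (use False in simp)
      finally show ?thesis using mn[of x] by simp
    qed
  qed
qed

lemma HB:
  fixes p :: "'v::real_vector \<Rightarrow> real"
  assumes p: "sublin p" and q0: "1 \<le> p q0"
  shows "\<exists>G. linear G \<and> (\<forall>x. G x \<le> p x) \<and> 1 \<le> G q0"
proof -
  define S where "S = {q. sublin q \<and> (\<forall>x. q x \<le> p x) \<and> q (-q0) \<le> -1}"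
  define p0 where "p0 = shiftinf p q0 1"
  have p0S: "p0 \<in> S" unfolding S_def p0_def using shiftinf_props[OF p q0] by auto
  have "\<exists>M\<in>epiS ` S. \<forall>X\<in>epiS ` S. M \<subseteq> X \<longrightarrow> X = M"
  proof (rule Zorn_Lemma2, intro ballI)
    fix C assume C: "C \<in> chains (epiS ` S)"
    show "\<exists>U\<in>epiS ` S. \<forall>X\<in>C. X \<subseteq> U"
    proof (cases "C = {}")
      case True then show ?thesis using p0S by blast
    next
      case False
      define Q where "Q = {q\<in>S. epiS q \<in> C}"
      have CQ: "C = epiS ` Q" using chainsD2[OF C] unfolding Q_def by auto
      then have Qne: "Q \<noteq> {}" using False by auto
      have QS: "Q \<subseteq> S" unfolding Q_def by auto
      have chain: "\<exists>q\<in>Q. (\<forall>x. q x \<le> q1 x) \<and> (\<forall>x. q x \<le> q2 x)" if "q1 \<in> Q" "q2 \<in> Q" for q1 q2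
      proof -
        have "epiS q1 \<subseteq> epiS q2 \<or> epiS q2 \<subseteq> epiS q1"
          using chainsD[OF C] that CQ by blast
        then show ?thesis using that epiS_sub[of q1 q2] epiS_sub[of q2 q1] by auto
      qed
      define u where "u x = (INF q\<in>Q. q x)" for x
      have bdd: "bdd_below ((\<lambda>q. q x) ` Q)" for x
      proof (rule bdd_belowI2)
        fix q assume "q \<in> Q"
        then have "sublin q" "q (-x) \<le> p (-x)" using QS S_def by auto
        then show "- p (-x) \<le> q x" using sublin_neg[of q x] by simp
      qed
      have ule: "u x \<le> q x" if "q \<in> Q" for q x
        unfolding u_def using bdd that by (rule cINF_lower)
      have uge: "c \<le> u x" if "\<And>q. q \<in> Q \<Longrightarrow> c \<le> q x" for c x
        unfolding u_def using Qne that by (intro cINF_greatest) auto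
      have "sublin u"
        unfolding sublin_def
      proof (intro conjI allI impI)
        fix x y
        have "u (x + y) - q2 y \<le> q1 x" if q12: "q1 \<in> Q" "q2 \<in> Q" for q1 q2
        proof -
          obtain q where q: "q \<in> Q" "\<forall>x. q x \<le> q1 x" "\<forall>x. q x \<le> q2 x" using chain[OF q12] by blast
          have "sublin q" using q QS S_def by auto
          then have "q (x + y) \<le> q x + q y" by (rule sublin_add)
          then show ?thesis using ule[OF q(1), of "x+y"] q(2)[rule_format, of x] q(3)[rule_format, of y] by linarith
        qed
        then have "u (x + y) - q2 y \<le> u x" if "q2 \<in> Q" for q2 using that by (intro uge) auto
        then have "u (x + y) - u x \<le> u y" by (intro uge) force
        then show "u (x + y) \<le> u x + u y" by simp
      next
        fix t :: real and x assume t: "t > 0"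
        have "u (t *\<^sub>R x) / t \<le> u x"
        proof (rule uge)
          fix q assume q: "q \<in> Q"
          have "sublin q" using q QS S_def by auto
          then have "q (t *\<^sub>R x) \<le> t * q x" using t by (rule sublin_scale)
          then show "u (t *\<^sub>R x) / t \<le> q x" using ule[OF q, of "t *\<^sub>R x"] t by (simp add: field_simps)
        qed
        then show "u (t *\<^sub>R x) \<le> t * u x" using t by (simp add: field_simps)
      qed
      moreover obtain q1 where q1: "q1 \<in> Q" using Qne by blast
      ultimately have "u \<in> S" unfolding S_def using ule[OF q1] q1 QS S_def
        by (auto intro: order_trans)
      moreover have "\<forall>X\<in>C. X \<subseteq> epiS u" using CQ ule epiS_sub by blast
      ultimately show ?thesis by blast
    qed
  qed
  then obtain m where mS: "m \<in> S" and max: "\<And>q. q \<in> S \<Longrightarrow> epiS m \<subseteq> epiS q \<Longrightarrow> epiS q = epiS m"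
    by blast
  have m: "sublin m" "\<And>x. m x \<le> p x" "m (-q0) \<le> -1" using mS S_def by auto
  have "m (-a) \<le> - m a" for a
  proof -
    let ?q = "shiftinf m a (m a)"
    have qp: "sublin ?q" "\<And>x. ?q x \<le> m x" "?q (-a) \<le> - m a" using shiftinf_props[OF m(1), of "m a" a] by auto
    have "?q \<in> S" unfolding S_def using qp m by (auto intro: order_trans)
    moreover have "epiS m \<subseteq> epiS ?q" using qp epiS_sub by blast
    ultimately have "epiS ?q = epiS m" using max by blast
    then have "\<forall>x. m x \<le> ?q x" using epiS_sub by blast
    then show ?thesis using qp(3) by (meson order_trans)
  qed
  then have "linear m" using sublin_linear[OF m(1)] by blast
  moreover have "1 \<le> m q0" using m(3) \<open>linear m\<close> by (simp add: linear_neg)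
  ultimately show ?thesis using m(2) by blast
qed


definition mink :: "'v::real_vector set \<Rightarrow> 'v \<Rightarrow> real" where
  "mink D z = Inf {t. t > 0 \<and> (1/t) *\<^sub>R z \<in> D}"

locale minkD =
  fixes D :: "'v::real_vector set"
  assumes cvx: "convex D" and zero: "0 \<in> D" and absorb: "\<And>z. \<exists>s>0. s *\<^sub>R z \<in> D"
begin

definition T where "T z = {t. t > 0 \<and> (1/t) *\<^sub>R z \<in> D}"

lemma mink_T: "mink D z = Inf (T z)" unfolding mink_def T_def ..

lemma T_ne: "T z \<noteq> {}"
proof -
  obtain s where "s > 0" "s *\<^sub>R z \<in> D" using absorb by blast
  then have "1/s \<in> T z" unfolding T_def by simp
  then show ?thesis by blast
qed

lemma T_bdd: "bdd_below (T z)" unfolding T_def by (rule bdd_belowI[of _ 0]) auto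

lemma T_mono: assumes "t \<in> T z" "t \<le> t'" shows "t' \<in> T z"
proof -
  have t: "t > 0" "(1/t) *\<^sub>R z \<in> D" using assms unfolding T_def by auto
  then have t': "t' > 0" using assms by simp
  have "(t/t') *\<^sub>R ((1/t) *\<^sub>R z) + (1 - t/t') *\<^sub>R 0 \<in> D"
    using convexD[OF cvx t(2) zero, of "t/t'" "1 - t/t'"] t t' assms(2) by simp
  then have "(1/t') *\<^sub>R z \<in> D" using t by simp
  then show ?thesis using t' unfolding T_def by simp
qed

lemma mink_nonneg: "0 \<le> mink D z"
  unfolding mink_T using T_ne by (rule cInf_greatest) (auto simp: T_def)

lemma mink_le_T: "t \<in> T z \<Longrightarrow> mink D z \<le> t"
  unfolding mink_T using T_bdd by (simp add: cInf_lower)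

lemma mink_ge: "(\<And>t. t \<in> T z \<Longrightarrow> c \<le> t) \<Longrightarrow> c \<le> mink D z"
  unfolding mink_T using T_ne by (rule cInf_greatest)

lemma mink_le1: "z \<in> D \<Longrightarrow> mink D z \<le> 1"
  by (rule mink_le_T) (simp add: T_def)

lemma mink_ge1: assumes "z \<notin> D" shows "1 \<le> mink D z"
proof (rule ccontr)
  assume "\<not> 1 \<le> mink D z"
  then have "Inf (T z) < 1" by (simp add: mink_T)
  then obtain t where "t \<in> T z" "t < 1" using cInf_less_iff[OF T_ne T_bdd] by blast
  then have "1 \<in> T z" using T_mono by simp
  then show False using assms unfolding T_def by simp
qed

lemma mink_zero_if: assumes "\<And>t. t > 0 \<Longrightarrow> t *\<^sub>R z \<in> D" shows "mink D z \<le> 0"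
proof -
  have "mink D z \<le> e" if "e > 0" for e
    by (rule mink_le_T) (use that assms[of "1/e"] in \<open>simp add: T_def\<close>)
  then show ?thesis by (metis dense_le_bounded linorder_not_less not_less_iff_gr_or_eq)
qed

lemma sublin_mink: "sublin (mink D)"
  unfolding sublin_def
proof (intro conjI allI impI)
  fix x y
  have add: "s + t \<in> T (x + y)" if s: "s \<in> T x" and t: "t \<in> T y" for s t
  proof -
    have s': "s > 0" "(1/s) *\<^sub>R x \<in> D" and t': "t > 0" "(1/t) *\<^sub>R y \<in> D" using s t unfolding T_def by auto
    have "(s/(s+t)) *\<^sub>R ((1/s) *\<^sub>R x) + (t/(s+t)) *\<^sub>R ((1/t) *\<^sub>R y) \<in> D"
      using convexD[OF cvx s'(2) t'(2), of "s/(s+t)" "t/(s+t)"] s' t' by (simp add: add_divide_distrib[symmetric])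
    moreover have "(s/(s+t)) *\<^sub>R ((1/s) *\<^sub>R x) + (t/(s+t)) *\<^sub>R ((1/t) *\<^sub>R y) = (1/(s+t)) *\<^sub>R (x + y)"
      using s' t' by (simp add: scaleR_add_right)
    ultimately show ?thesis using s' t' unfolding T_def by simp
  qed
  have "mink D (x + y) - t \<le> mink D x" if t: "t \<in> T y" for t
    using mink_le_T[OF add[OF _ t]] by (intro mink_ge) force
  then have "mink D (x + y) - mink D x \<le> mink D y" by (intro mink_ge) force
  then show "mink D (x + y) \<le> mink D x + mink D y" by simp
next
  fix c :: real and z assume c: "c > 0"
  have "mink D (c *\<^sub>R z) / c \<le> mink D z"
  proof (rule mink_ge)
    fix t assume t: "t \<in> T z"
    then have "c * t \<in> T (c *\<^sub>R z)" using c unfolding T_def by simp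
    then have "mink D (c *\<^sub>R z) \<le> c * t" by (rule mink_le_T)
    then show "mink D (c *\<^sub>R z) / c \<le> t" using c by (simp add: field_simps)
  qed
  then show "mink D (c *\<^sub>R z) \<le> c * mink D z" using c by (simp add: field_simps)
qed

end


lemma cont_UNIV_iff: "continuous_on UNIV f \<longleftrightarrow> (\<forall>B. open B \<longrightarrow> open (f -` B))"
  using continuous_on_open_vimage[OF open_UNIV, of f] by simp

context
  fixes dummy :: "'a::{real_vector,topological_space} itself"
  assumes lc: "locally_convex_tvs TYPE('a)"
begin

lemma lc_add: "continuous_on UNIV (\<lambda>x::'a. a + x)"
proof -
  have "continuous_on UNIV (\<lambda>p::'a \<times> 'a. fst p + snd p)" using lc unfolding locally_convex_tvs_def by blast
  moreover have "continuous_on UNIV (\<lambda>x::'a. (a, x))" by (intro continuous_intros)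
  ultimately show ?thesis using continuous_on_compose2[of UNIV "\<lambda>p::'a \<times> 'a. fst p + snd p" UNIV "\<lambda>x::'a. (a, x)"] by simp
qed

lemma lc_scale: "continuous_on UNIV (\<lambda>x::'a. c *\<^sub>R x)"
proof -
  have "continuous_on UNIV (\<lambda>p::real \<times> 'a. fst p *\<^sub>R snd p)" using lc unfolding locally_convex_tvs_def by blast
  moreover have "continuous_on UNIV (\<lambda>x::'a. (c, x))" by (intro continuous_intros)
  ultimately show ?thesis using continuous_on_compose2[of UNIV "\<lambda>p::real \<times> 'a. fst p *\<^sub>R snd p" UNIV "\<lambda>x::'a. (c, x)"] by simp
qed

lemma lc_scale_t: "continuous_on UNIV (\<lambda>t::real. t *\<^sub>R (x::'a))"
proof -
  have "continuous_on UNIV (\<lambda>p::real \<times> 'a. fst p *\<^sub>R snd p)" using lc unfolding locally_convex_tvs_def by blast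
  moreover have "continuous_on UNIV (\<lambda>t::real. (t, x))" by (intro continuous_intros)
  ultimately show ?thesis using continuous_on_compose2[of UNIV "\<lambda>p::real \<times> 'a. fst p *\<^sub>R snd p" UNIV "\<lambda>t::real. (t, x)"] by simp
qed

lemma lc_base: "open (U::'a set) \<Longrightarrow> 0 \<in> U \<Longrightarrow> \<exists>V. open V \<and> convex V \<and> 0 \<in> V \<and> V \<subseteq> U"
  using lc unfolding locally_convex_tvs_def by blast

lemma open_trans: assumes "open (U::'a set)" shows "open ((\<lambda>x. a + x) ` U)"
proof -
  have "(\<lambda>x. a + x) ` U = (\<lambda>x. -a + x) -` U" by (force simp: image_iff)
  then show ?thesis using lc_add[of "-a"] assms cont_UNIV_iff by metis
qed

lemma open_scale: assumes "open (U::'a set)" "c \<noteq> 0" shows "open ((\<lambda>x. c *\<^sub>R x) ` U)"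
proof -
  have "(\<lambda>x. c *\<^sub>R x) ` U = (\<lambda>x. (1/c) *\<^sub>R x) -` U"
    using assms(2) by (force simp: image_iff)
  then show ?thesis using lc_scale[of "1/c"] assms cont_UNIV_iff by metis
qed

lemma open_trans_vimage: assumes "open (U::'a set)" shows "open ((\<lambda>x. a + x) -` U)"
  using lc_add[of a] assms cont_UNIV_iff by metis

lemma open_scale_vimage: assumes "open (U::'a set)" shows "open ((\<lambda>x. c *\<^sub>R x) -` U)"
  using lc_scale[of c] assms cont_UNIV_iff by metis

lemma absorb_open: assumes "open (U::'a set)" "0 \<in> U"
  shows "\<exists>s>0. \<forall>t. \<bar>t\<bar> < s \<longrightarrow> t *\<^sub>R x \<in> U"
proof -
  have "open ((\<lambda>t::real. t *\<^sub>R x) -` U)" using lc_scale_t[of x] assms cont_UNIV_iff by metis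
  moreover have "0 \<in> (\<lambda>t::real. t *\<^sub>R x) -` U" using assms by simp
  ultimately obtain s where "s > 0" "ball 0 s \<subseteq> (\<lambda>t::real. t *\<^sub>R x) -` U"
    using open_contains_ball by blast
  then show ?thesis by (auto simp: dist_real_def subset_iff)
qed

lemma lin_cont: assumes lin: "linear (\<psi>::'a \<Rightarrow> real)" and N: "open N" "0 \<in> N" and b: "\<And>x. x \<in> N \<Longrightarrow> \<bar>\<psi> x\<bar> \<le> 1"
  shows "continuous_on UNIV \<psi>"
  unfolding cont_UNIV_iff
proof (intro allI impI)
  fix B :: "real set" assume B: "open B"
  show "open (\<psi> -` B)"
    unfolding open_subopen[of "\<psi> -` B"]
  proof
    fix z assume z: "z \<in> \<psi> -` B"
    then obtain e where e: "e > 0" "ball (\<psi> z) e \<subseteq> B" using B open_contains_ball by blast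
    let ?T = "(\<lambda>x. z + x) ` ((\<lambda>x. (e/2) *\<^sub>R x) ` N)"
    have "open ?T" using open_trans open_scale N e by simp
    moreover have "z \<in> ?T" using N by (auto simp: image_iff intro!: bexI[of _ 0])
    moreover have "?T \<subseteq> \<psi> -` B"
    proof
      fix w assume "w \<in> ?T"
      then obtain n where n: "n \<in> N" "w = z + (e/2) *\<^sub>R n" by auto
      have "\<psi> w = \<psi> z + (e/2) * \<psi> n" using lin n(2) by (simp add: linear_add linear_scale)
      moreover have "\<bar>(e/2) * \<psi> n\<bar> \<le> e/2" using b[OF n(1)] e by (simp add: abs_mult)
      ultimately have "\<psi> w \<in> ball (\<psi> z) e" using e by (simp add: dist_real_def)
      then show "w \<in> \<psi> -` B" using e by auto
    qed
    ultimately show "\<exists>T. open T \<and> z \<in> T \<and> T \<subseteq> \<psi> -` B" by blast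
  qed
qed

end


lemma small_aux: assumes e: "(e::real) > 0" shows "e / (2 * (\<bar>b\<bar> + 1)) * \<bar>b\<bar> < e"
proof -
  have d: "0 < 2*(\<bar>b\<bar>+1)" by simp
  have "\<bar>b\<bar> / (2*(\<bar>b\<bar>+1)) < 1" using d by (simp add: divide_less_eq)
  then have "e * (\<bar>b\<bar> / (2*(\<bar>b\<bar>+1))) < e * 1" using e by (intro mult_strict_left_mono)
  then show ?thesis by simp
qed

lemma gamma_cvx:
  assumes f: "f \<in> GammaX" and h: "f x1 \<le> ereal r1" "f x2 \<le> ereal r2" and uw: "0 \<le> u" "0 \<le> w" "u + w = 1"
  shows "f (u *\<^sub>R x1 + w *\<^sub>R x2) \<le> ereal (u * r1 + w * r2)"
proof -
  have u: "u = 1 - w" using uw by simp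
  have "f ((1 - w) *\<^sub>R x1 + w *\<^sub>R x2) \<le> ereal (1 - w) * f x1 + ereal w * f x2"
    using f uw unfolding GammaX_def by auto
  also have "\<dots> \<le> ereal (1 - w) * ereal r1 + ereal w * ereal r2"
    by (intro add_mono ereal_mult_left_mono h) (use uw in auto)
  finally show ?thesis using u by simp
qed

lemma gamma_dom: assumes "f \<in> GammaX" obtains x0 r0 where "f x0 = ereal r0"
proof -
  obtain x0 where "f x0 \<noteq> \<infinity>" "f x0 \<noteq> -\<infinity>" using assms unfolding GammaX_def by auto
  then show ?thesis using that by (cases "f x0") auto
qed

lemma gamma_closed: "f \<in> GammaX \<Longrightarrow> closed {x. f x \<le> ereal c}"
  unfolding GammaX_def by auto

lemma sep_epi:
  fixes f :: "'a::{real_vector,topological_space} \<Rightarrow> ereal"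
  assumes lc: "locally_convex_tvs TYPE('a)" and f: "f \<in> GammaX" and ay: "ereal \<alpha> < f y"
  shows "\<exists>\<psi> \<beta> \<delta>. \<psi> \<in> topdual \<and> \<delta> > 0 \<and> (\<forall>x r. f x \<le> ereal r \<longrightarrow> \<psi> x + \<beta> * r + \<delta> \<le> \<psi> y + \<beta> * \<alpha>)"
proof -
  obtain \<epsilon> where \<epsilon>: "\<epsilon> > 0" "ereal (\<alpha> + \<epsilon>) < f y"
  proof (cases "f y")
    case (real r)
    have "\<alpha> < r" using ay real by simp
    then show ?thesis by (intro that[of "(r - \<alpha>)/2"]) (auto simp: real field_simps)
  next
    case PInf then show ?thesis using that[of 1] by simp
  next
    case MInf then show ?thesis using ay by simp
  qed
  define Ob where "Ob = - {x. f x \<le> ereal (\<alpha> + \<epsilon>)}"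
  have "open Ob" unfolding Ob_def using gamma_closed[OF f] by auto
  then have "open ((\<lambda>x. y + x) -` Ob)" using open_trans_vimage[OF lc] by blast
  moreover have "0 \<in> (\<lambda>x. y + x) -` Ob" using \<epsilon> unfolding Ob_def by simp
  ultimately obtain V where V: "open V" "convex V" "0 \<in> V" "V \<subseteq> (\<lambda>x. y + x) -` Ob"
    using lc_base[OF lc] by blast
  have Vy: "\<not> f (y + v) \<le> ereal (\<alpha> + \<epsilon>)" if "v \<in> V" for v using V(4) that unfolding Ob_def by auto
  obtain x0 r0 where x0: "f x0 = ereal r0" using gamma_dom[OF f] by blast
  define D :: "('a \<times> real) set" where
    "D = {z. \<exists>x r v s. f x \<le> ereal r \<and> v \<in> V \<and> \<bar>s\<bar> < \<epsilon> \<and> z = (x - v - x0, r - s - r0)}"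
  have Dmem: "(x - v - x0, r - s - r0) \<in> D" if "f x \<le> ereal r" "v \<in> V" "\<bar>s\<bar> < \<epsilon>" for x r v s
    unfolding D_def using that by blast
  have Dsmall: "(-v, -s) \<in> D" if "v \<in> V" "\<bar>s\<bar> < \<epsilon>" for v s
    using Dmem[OF _ that, of x0 r0] x0 by simp
  have "minkD D"
  proof
    show "convex D"
    proof (rule convexI)
      fix z1 z2 and u w :: real assume z: "z1 \<in> D" "z2 \<in> D" and uw: "0 \<le> u" "0 \<le> w" "u + w = 1"
      obtain x1 r1 v1 s1 where 1: "f x1 \<le> ereal r1" "v1 \<in> V" "\<bar>s1\<bar> < \<epsilon>" "z1 = (x1 - v1 - x0, r1 - s1 - r0)"
        using z(1) unfolding D_def by blast
      obtain x2 r2 v2 s2 where 2: "f x2 \<le> ereal r2" "v2 \<in> V" "\<bar>s2\<bar> < \<epsilon>" "z2 = (x2 - v2 - x0, r2 - s2 - r0)"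
        using z(2) unfolding D_def by blast
      have "f (u *\<^sub>R x1 + w *\<^sub>R x2) \<le> ereal (u * r1 + w * r2)" using gamma_cvx[OF f 1(1) 2(1) uw] .
      moreover have "u *\<^sub>R v1 + w *\<^sub>R v2 \<in> V" using convexD[OF V(2) 1(2) 2(2) uw] .
      moreover have "u *\<^sub>R s1 + w *\<^sub>R s2 \<in> ball 0 \<epsilon>"
        using convexD[OF convex_ball[of 0 \<epsilon>], of s1 s2 u w] 1(3) 2(3) uw by (simp add: dist_real_def)
      ultimately have "(u *\<^sub>R x1 + w *\<^sub>R x2 - (u *\<^sub>R v1 + w *\<^sub>R v2) - x0,
                       (u * r1 + w * r2) - (u * s1 + w * s2) - r0) \<in> D"
        by (intro Dmem) (auto simp: dist_real_def)
      moreover have "u *\<^sub>R z1 + w *\<^sub>R z2 = (u *\<^sub>R x1 + w *\<^sub>R x2 - (u *\<^sub>R v1 + w *\<^sub>R v2) - x0,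
                       (u * r1 + w * r2) - (u * s1 + w * s2) - r0)"
      proof -
        have "u *\<^sub>R z1 + w *\<^sub>R z2 = (u *\<^sub>R x1 + w *\<^sub>R x2 - (u *\<^sub>R v1 + w *\<^sub>R v2) - (u + w) *\<^sub>R x0,
                       (u * r1 + w * r2) - (u * s1 + w * s2) - (u + w) * r0)"
          by (simp add: 1(4) 2(4) algebra_simps)
        then show ?thesis using uw(3) by simp
      qed
      ultimately show "u *\<^sub>R z1 + w *\<^sub>R z2 \<in> D" by simp
    qed
  next
    show "0 \<in> D" using Dsmall[of 0 0] V \<epsilon> by (simp add: zero_prod_def)
  next
    fix z :: "'a \<times> real"
    obtain a b where z: "z = (a, b)" by fastforce
    obtain s1 where s1: "s1 > 0" "\<And>t. \<bar>t\<bar> < s1 \<Longrightarrow> t *\<^sub>R (-a) \<in> V" using absorb_open[OF lc V(1,3)] by blast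
    define s where "s = min (s1/2) (\<epsilon> / (2 * (\<bar>b\<bar> + 1)))"
    have s: "s > 0" "s < s1" "\<bar>s * b\<bar> < \<epsilon>"
    proof -
      show "s > 0" "s < s1" using s1 \<epsilon> unfolding s_def by auto
      have "s * \<bar>b\<bar> \<le> (\<epsilon> / (2 * (\<bar>b\<bar> + 1))) * \<bar>b\<bar>" unfolding s_def
        using \<open>s > 0\<close> s_def by (intro mult_right_mono) auto
      also have "\<dots> < \<epsilon>" using small_aux[OF \<epsilon>(1)] .
      finally show "\<bar>s * b\<bar> < \<epsilon>" using \<open>s > 0\<close> by (simp add: abs_mult)
    qed
    have "(- (s *\<^sub>R (-a)), - (- (s * b))) \<in> D" using Dsmall[of "s *\<^sub>R (-a)" "- (s * b)"] s1(2)[of s] s by simp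
    then have "s *\<^sub>R z \<in> D" using z by simp
    then show "\<exists>s>0. s *\<^sub>R z \<in> D" using s by blast
  qed
  define q where "q = (y - x0, \<alpha> - r0)"
  have qD: "q \<notin> D"
  proof
    assume "q \<in> D"
    then obtain x r v s where h: "f x \<le> ereal r" "v \<in> V" "\<bar>s\<bar> < \<epsilon>" "q = (x - v - x0, r - s - r0)"
      unfolding D_def by blast
    then have "x = y + v" "r = \<alpha> + s" unfolding q_def by (auto simp: algebra_simps)
    moreover have "ereal r \<le> ereal (\<alpha> + \<epsilon>)" using h(3) \<open>r = \<alpha> + s\<close> by simp
    ultimately have "f (y + v) \<le> ereal (\<alpha> + \<epsilon>)" using h(1) order_trans by blast
    then show False using Vy h(2) by blast
  qed
  interpret minkD D by fact
  have "1 \<le> mink D q" using mink_ge1[OF qD] .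
  then obtain G where G: "linear G" "\<And>z. G z \<le> mink D z" "1 \<le> G q"
    using HB[OF sublin_mink] by blast
  define \<psi> where "\<psi> x = G (x, 0)" for x
  define \<beta> where "\<beta> = G (0, 1)"
  have Gxr: "G (x, r) = \<psi> x + \<beta> * r" for x r
  proof -
    have "G (x, r) = G ((x, 0) + r *\<^sub>R (0, 1))" by simp
    also have "\<dots> = G (x, 0) + G (r *\<^sub>R (0, 1))" by (rule linear_add[OF G(1)])
    also have "\<dots> = G (x, 0) + r * G (0, 1)" using linear_scale[OF G(1), of r "(0, 1)"] by simp
    finally show ?thesis unfolding \<psi>_def \<beta>_def by simp
  qed
  have lin: "linear \<psi>"
  proof (rule linearI)
    show "\<psi> (x1 + x2) = \<psi> x1 + \<psi> x2" for x1 x2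
      unfolding \<psi>_def using linear_add[OF G(1), of "(x1, 0)" "(x2, 0)"] by simp
    show "\<psi> (c *\<^sub>R x) = c *\<^sub>R \<psi> x" for c x
      unfolding \<psi>_def using linear_scale[OF G(1), of c "(x, 0)"] by simp
  qed
  define N where "N = V \<inter> (\<lambda>x. (-1) *\<^sub>R x) -` V"
  have "open N" unfolding N_def using V(1) open_scale_vimage[OF lc] by blast
  moreover have "0 \<in> N" unfolding N_def using V by simp
  moreover have "\<bar>\<psi> x\<bar> \<le> 1" if "x \<in> N" for x
  proof -
    have "(x, 0) \<in> D" using Dsmall[of "-x" 0] that \<epsilon> unfolding N_def by simp
    then have "\<psi> x \<le> 1" unfolding \<psi>_def using G(2)[of "(x, 0)"] mink_le1[of "(x, 0)"] by linarith
    moreover have "(-x, 0) \<in> D" using Dsmall[of x 0] that \<epsilon> unfolding N_def by simp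
    then have "\<psi> (-x) \<le> 1" unfolding \<psi>_def using G(2)[of "(-x, 0)"] mink_le1[of "(-x, 0)"] by linarith
    ultimately show ?thesis using linear_neg[OF lin, of x] by simp
  qed
  ultimately have "continuous_on UNIV \<psi>" using lin_cont[OF lc lin] by blast
  then have \<psi>: "\<psi> \<in> topdual" using lin unfolding topdual_def by simp
  obtain s1 where s1: "s1 > 0" "\<And>t. \<bar>t\<bar> < s1 \<Longrightarrow> t *\<^sub>R (y - x0) \<in> V" using absorb_open[OF lc V(1,3)] by blast
  define c where "c = min (s1/2) (\<epsilon> / (2 * (\<bar>\<alpha> - r0\<bar> + 1)))"
  have c: "c > 0" "c < s1" "\<bar>c * (\<alpha> - r0)\<bar> < \<epsilon>"
  proof -
    have h: "0 < \<epsilon> / (2 * (\<bar>\<alpha> - r0\<bar> + 1))" by (rule divide_pos_pos) (use \<epsilon> in \<open>smt (verit) abs_ge_zero\<close>)+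
    show "c > 0" "c < s1" using s1 h unfolding c_def by auto
    have "c * \<bar>\<alpha> - r0\<bar> \<le> (\<epsilon> / (2 * (\<bar>\<alpha> - r0\<bar> + 1))) * \<bar>\<alpha> - r0\<bar>" unfolding c_def
      using \<open>c > 0\<close> c_def by (intro mult_right_mono) auto
    also have "\<dots> < \<epsilon>" using small_aux[OF \<epsilon>(1)] .
    finally show "\<bar>c * (\<alpha> - r0)\<bar> < \<epsilon>" using \<open>c > 0\<close> by (simp add: abs_mult)
  qed
  have "\<psi> x + \<beta> * r + c \<le> \<psi> y + \<beta> * \<alpha>" if fx: "f x \<le> ereal r" for x r
  proof -
    have "(x - (-c) *\<^sub>R (y - x0) - x0, r - (-(c * (\<alpha> - r0))) - r0) \<in> D"
      using Dmem[OF fx s1(2)[of "-c"], of "-(c * (\<alpha> - r0))"] c by simp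
    moreover have "(x - (-c) *\<^sub>R (y - x0) - x0, r - (-(c * (\<alpha> - r0))) - r0) = (x - x0, r - r0) + c *\<^sub>R q"
      unfolding q_def by (simp add: algebra_simps)
    ultimately have "(x - x0, r - r0) + c *\<^sub>R q \<in> D" by simp
    then have "G ((x - x0, r - r0) + c *\<^sub>R q) \<le> 1" using G(2)[of "(x - x0, r - r0) + c *\<^sub>R q"] mink_le1 by fastforce
    then have "G (x - x0, r - r0) + c * G q \<le> 1" using G(1) by (simp add: linear_add linear_scale)
    moreover have "c \<le> c * G q" using G(3) c(1) mult_left_mono[of 1 "G q" c] by simp
    ultimately have "G (x - x0, r - r0) + c \<le> G q" using G(3) by linarith
    then show ?thesis unfolding q_def Gxr using linear_diff[OF lin] by (simp add: algebra_simps)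
  qed
  then show ?thesis using \<psi> c(1) by blast
qed


lemma topdual_add: "\<psi>1 \<in> topdual \<Longrightarrow> \<psi>2 \<in> topdual \<Longrightarrow> (\<lambda>x. \<psi>1 x + \<psi>2 x) \<in> topdual"
  unfolding topdual_def by (auto intro: linear_compose_add continuous_on_add)

lemma topdual_scale: assumes "\<psi> \<in> topdual" shows "(\<lambda>x. c * \<psi> x) \<in> topdual"
proof -
  have "linear \<psi>" "continuous_on UNIV \<psi>" using assms unfolding topdual_def by auto
  moreover have "linear (\<lambda>x. c * \<psi> x)" using \<open>linear \<psi>\<close>
    by (intro linearI) (simp_all add: linear_add linear_scale algebra_simps)
  ultimately show ?thesis unfolding topdual_def by (auto intro: continuous_on_mult continuous_on_const)
qed

lemma topdual_zero: "(\<lambda>x. 0) \<in> topdual"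
  unfolding topdual_def by (auto intro: linearI)

lemma topdual_lin: "\<psi> \<in> topdual \<Longrightarrow> linear \<psi>" unfolding topdual_def by auto

lemma gamma_nonMInf: "f \<in> GammaX \<Longrightarrow> f x \<noteq> -\<infinity>" unfolding GammaX_def by auto

lemma AM_aux:
  assumes f: "f \<in> GammaX" and \<psi>: "\<psi> \<in> topdual" and \<beta>: "\<beta> < 0"
    and h: "\<forall>x r. f x \<le> ereal r \<longrightarrow> \<psi> x + \<beta> * r + \<delta> \<le> \<psi> y + \<beta> * \<alpha>" and \<delta>: "\<delta> \<ge> 0"
  shows "\<exists>\<psi>' c. \<psi>' \<in> topdual \<and> (\<forall>x. ereal (\<psi>' x + c) \<le> f x) \<and> \<alpha> \<le> \<psi>' y + c"
proof -
  define \<psi>' where "\<psi>' = (\<lambda>x. (-1/\<beta>) * \<psi> x)"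
  define c where "c = \<alpha> - \<psi>' y"
  have "\<psi>' \<in> topdual" unfolding \<psi>'_def by (rule topdual_scale[OF \<psi>])
  moreover have "ereal (\<psi>' x + c) \<le> f x" for x
  proof (cases "f x")
    case (real r)
    then have "\<psi> x + \<beta> * r + \<delta> \<le> \<psi> y + \<beta> * \<alpha>" using h by simp
    then have "\<psi> x - \<psi> y \<le> (-\<beta>) * (r - \<alpha>)" using \<delta> by (simp add: algebra_simps)
    moreover have nb: "0 < -\<beta>" using \<beta> by simp
    ultimately have "(\<psi> x - \<psi> y) / (-\<beta>) \<le> r - \<alpha>"
      by (intro iffD2[OF pos_divide_le_eq[OF nb]]) (simp add: mult.commute)
    moreover have "\<psi>' x + c = (\<psi> x - \<psi> y) / (-\<beta>) + \<alpha>" unfolding c_def \<psi>'_def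
      using nb by (simp add: field_simps)
    ultimately have "\<psi>' x + c \<le> r" by linarith
    then show ?thesis using real by simp
  next
    case PInf then show ?thesis by simp
  next
    case MInf then show ?thesis using gamma_nonMInf[OF f] by simp
  qed
  moreover have "\<alpha> \<le> \<psi>' y + c" unfolding c_def by simp
  ultimately show ?thesis by blast
qed

lemma AM:
  fixes f :: "'a::{real_vector,topological_space} \<Rightarrow> ereal"
  assumes lc: "locally_convex_tvs TYPE('a)" and f: "f \<in> GammaX" and ay: "ereal \<alpha> < f y"
  shows "\<exists>\<psi> c. \<psi> \<in> topdual \<and> (\<forall>x. ereal (\<psi> x + c) \<le> f x) \<and> \<alpha> \<le> \<psi> y + c"
proof -
  obtain x0 r0 where x0: "f x0 = ereal r0" using gamma_dom[OF f] by blast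
  obtain \<psi>1 c1 where m1: "\<psi>1 \<in> topdual" "\<And>x. ereal (\<psi>1 x + c1) \<le> f x"
  proof -
    obtain \<psi>0 \<beta>0 \<delta>0 where s0: "\<psi>0 \<in> topdual" "\<delta>0 > 0"
      "\<forall>x r. f x \<le> ereal r \<longrightarrow> \<psi>0 x + \<beta>0 * r + \<delta>0 \<le> \<psi>0 x0 + \<beta>0 * (r0 - 1)"
      using sep_epi[OF lc f, of "r0 - 1" x0] x0 by auto
    then have "\<psi>0 x0 + \<beta>0 * r0 + \<delta>0 \<le> \<psi>0 x0 + \<beta>0 * (r0 - 1)" using x0 by simp
    then have "\<beta>0 < 0" using s0(2) by (simp add: algebra_simps)
    then show ?thesis using AM_aux[OF f s0(1) _ s0(3)] s0(2) that by fastforce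
  qed
  obtain \<psi> \<beta> \<delta> where s: "\<psi> \<in> topdual" "\<delta> > 0"
      "\<forall>x r. f x \<le> ereal r \<longrightarrow> \<psi> x + \<beta> * r + \<delta> \<le> \<psi> y + \<beta> * \<alpha>"
    using sep_epi[OF lc f ay] by blast
  have "\<beta> \<le> 0"
  proof (rule ccontr)
    assume "\<not> \<beta> \<le> 0"
    then have b: "\<beta> > 0" by simp
    define r where "r = max r0 ((\<psi> y + \<beta> * \<alpha> - \<psi> x0) / \<beta> + 1)"
    have "f x0 \<le> ereal r" using x0 unfolding r_def by simp
    then have A1: "\<psi> x0 + \<beta> * r + \<delta> \<le> \<psi> y + \<beta> * \<alpha>" using s(3) by blast
    have "\<beta> * ((\<psi> y + \<beta> * \<alpha> - \<psi> x0) / \<beta> + 1) \<le> \<beta> * r"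
      unfolding r_def using b by (intro mult_left_mono) auto
    moreover have "\<psi> y + \<beta> * \<alpha> - \<psi> x0 + \<beta> = \<beta> * ((\<psi> y + \<beta> * \<alpha> - \<psi> x0) / \<beta> + 1)"
      using b by (simp add: field_simps)
    ultimately have "\<psi> y + \<beta> * \<alpha> - \<psi> x0 + \<beta> \<le> \<beta> * r" by linarith
    then show False using A1 b s(2) by linarith
  qed
  show ?thesis
  proof (cases "\<beta> < 0")
    case True
    then show ?thesis using AM_aux[OF f s(1) True s(3)] s(2) by simp
  next
    case False
    then have b0: "\<beta> = 0" using \<open>\<beta> \<le> 0\<close> by simp
    define L where "L = max 0 ((\<alpha> - \<psi>1 y - c1) / \<delta>)"
    have L: "L \<ge> 0" "\<alpha> - \<psi>1 y - c1 \<le> L * \<delta>"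
    proof -
      show "L \<ge> 0" unfolding L_def by simp
      have "(\<alpha> - \<psi>1 y - c1) / \<delta> \<le> L" unfolding L_def by simp
      then show "\<alpha> - \<psi>1 y - c1 \<le> L * \<delta>" using s(2) by (simp add: divide_le_eq)
    qed
    define \<psi>' where "\<psi>' = (\<lambda>x. \<psi>1 x + L * \<psi> x)"
    define c where "c = c1 + L * (\<delta> - \<psi> y)"
    have "\<psi>' \<in> topdual" unfolding \<psi>'_def by (intro topdual_add topdual_scale m1 s)
    moreover have "ereal (\<psi>' x + c) \<le> f x" for x
    proof (cases "f x")
      case (real r)
      then have "\<psi> x + \<delta> \<le> \<psi> y" using s(3) b0 by force
      then have "L * (\<psi> x + \<delta> - \<psi> y) \<le> 0" using L(1) by (simp add: mult_nonneg_nonpos)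
      moreover have "\<psi>1 x + c1 \<le> r" using m1(2)[of x] real by simp
      ultimately have "\<psi>' x + c \<le> r" unfolding \<psi>'_def c_def by (simp add: algebra_simps)
      then show ?thesis using real by simp
    next
      case PInf then show ?thesis by simp
    next
      case MInf then show ?thesis using gamma_nonMInf[OF f] by simp
    qed
    moreover have "\<alpha> \<le> \<psi>' y + c" unfolding \<psi>'_def c_def using L(2) by (simp add: algebra_simps)
    ultimately show ?thesis by blast
  qed
qed

definition ind0 :: "'a::real_vector \<Rightarrow> ereal" where "ind0 x = (if x = 0 then 0 else \<infinity>)"

lemma ind0_Gamma: "(ind0 :: 'a::{real_vector,t2_space} \<Rightarrow> ereal) \<in> GammaX"
  unfolding GammaX_def
proof (intro CollectI conjI allI impI)
  show "ind0 x \<noteq> -\<infinity>" for x :: 'a by (simp add: ind0_def)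
  show "\<exists>x::'a. ind0 x \<noteq> \<infinity>" by (rule exI[of _ 0]) (simp add: ind0_def)
  show "closed {x::'a. ind0 x \<le> ereal c}" for c
  proof -
    have "{x::'a. ind0 x \<le> ereal c} = (if 0 \<le> c then {0} else {})" by (auto simp: ind0_def)
    then show ?thesis by simp
  qed
  fix x y :: 'a and t :: real assume t: "0 \<le> t \<and> t \<le> 1"
  show "ind0 ((1 - t) *\<^sub>R x + t *\<^sub>R y) \<le> ereal (1 - t) * ind0 x + ereal t * ind0 y"
  proof (cases "t = 0")
    case True then show ?thesis by (simp add: ind0_def)
  next
    case t0: False
    show ?thesis
    proof (cases "t = 1")
      case True then show ?thesis by (simp add: ind0_def)
    next
      case False
      then have tt: "0 < t" "0 < 1 - t" using t t0 by auto
      show ?thesis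
      proof (cases "x = 0 \<and> y = 0")
        case True then show ?thesis by (simp add: ind0_def)
      next
        case False
        then have eq: "ereal (1 - t) * ind0 x + ereal t * ind0 y = \<infinity>"
          using tt by (auto simp: ind0_def)
        show ?thesis unfolding eq by simp
      qed
    qed
  qed
qed

lemma S1:
  fixes u :: "'a::{real_vector,t2_space}"
  assumes lc: "locally_convex_tvs TYPE('a)" and u: "u \<noteq> 0"
  shows "\<exists>k0\<in>topdual. k0 u > 0"
proof -
  have "ereal 1 < ind0 u" using u by (simp add: ind0_def)
  then obtain \<psi> c where h: "\<psi> \<in> topdual" "\<forall>x. ereal (\<psi> x + c) \<le> ind0 x" "1 \<le> \<psi> u + c"
    using AM[OF lc ind0_Gamma] by blast
  have "ereal (\<psi> 0 + c) \<le> 0" using h(2)[rule_format, of 0] by (simp add: ind0_def)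
  moreover have "\<psi> 0 = 0" using topdual_lin[OF h(1)] by (simp add: linear_0)
  ultimately have "c \<le> 0" by simp
  then show ?thesis using h by (intro bexI[of _ \<psi>]) auto
qed


instantiation "fun" :: (type, real_vector) real_vector
begin
definition scaleR_fun :: "real \<Rightarrow> ('a \<Rightarrow> 'b) \<Rightarrow> 'a \<Rightarrow> 'b" where
  "scaleR_fun c f = (\<lambda>x. c *\<^sub>R f x)"
instance by standard (simp_all add: scaleR_fun_def fun_eq_iff scaleR_add_right scaleR_add_left)
end

lemma scaleR_fun_apply [simp]: "(c *\<^sub>R f) x = c *\<^sub>R f x"
  by (simp add: scaleR_fun_def)

lemma sum_fun_apply: "(sum g F) y = (\<Sum>x\<in>F. g x y)"
  by (induction F rule: infinite_finite_induct) auto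

lemma FD:
  fixes A :: "('a \<Rightarrow> real) set" and \<phi> :: "'a \<Rightarrow> real"
  assumes cvx: "convex A" and F: "finite F" and e: "e > 0" and ne: "A \<noteq> {}"
    and far: "\<forall>a\<in>A. \<exists>x\<in>F. e \<le> \<bar>a x - \<phi> x\<bar>"
  shows "\<exists>l. \<forall>a\<in>A. (\<Sum>x\<in>F. l x * a x) < (\<Sum>x\<in>F. l x * \<phi> x)"
proof -
  obtain a0 where a0: "a0 \<in> A" using ne by blast
  define D where "D = {z. \<exists>a b. a \<in> A \<and> (\<forall>x\<in>F. \<bar>b x\<bar> < e) \<and> z = a - a0 + b}"
  have Dmem: "a - a0 + b \<in> D" if "a \<in> A" "\<forall>x\<in>F. \<bar>b x\<bar> < e" for a b
    unfolding D_def using that by blast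
  have Dsmall: "b \<in> D" if "\<forall>x\<in>F. \<bar>b x\<bar> < e" for b
    using Dmem[OF a0 that] by simp
  have small: "\<exists>s>0. \<forall>t. 0 < t \<and> t \<le> s \<longrightarrow> (\<forall>x\<in>F. \<bar>t * z x\<bar> < e)" for z :: "'a \<Rightarrow> real"
  proof -
    define S where "S = (\<Sum>x\<in>F. \<bar>z x\<bar>)"
    have S0: "S \<ge> 0" unfolding S_def by (simp add: sum_nonneg)
    define s where "s = e / (2 * (\<bar>S\<bar> + 1))"
    have s0: "s > 0" unfolding s_def using e S0 by simp
    have "\<bar>t * z x\<bar> < e" if t: "0 < t" "t \<le> s" and x: "x \<in> F" for t x
    proof -
      have zx: "\<bar>z x\<bar> \<le> S" unfolding S_def by (rule member_le_sum[OF x]) (use F in auto)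
      have "\<bar>t * z x\<bar> = t * \<bar>z x\<bar>" using t by (simp add: abs_mult)
      also have "\<dots> \<le> s * S" using t zx by (intro mult_mono) auto
      also have "\<dots> = s * \<bar>S\<bar>" using S0 by simp
      also have "\<dots> < e" unfolding s_def using small_aux[OF e] .
      finally show ?thesis .
    qed
    then show ?thesis using s0 by blast
  qed
  have "minkD D"
  proof
    show "convex D"
    proof (rule convexI)
      fix z1 z2 and u w :: real assume z: "z1 \<in> D" "z2 \<in> D" and uw: "0 \<le> u" "0 \<le> w" "u + w = 1"
      obtain a1 b1 where 1: "a1 \<in> A" "\<forall>x\<in>F. \<bar>b1 x\<bar> < e" "z1 = a1 - a0 + b1" using z(1) unfolding D_def by blast
      obtain a2 b2 where 2: "a2 \<in> A" "\<forall>x\<in>F. \<bar>b2 x\<bar> < e" "z2 = a2 - a0 + b2" using z(2) unfolding D_def by blast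
      have "u *\<^sub>R a1 + w *\<^sub>R a2 \<in> A" using convexD[OF cvx 1(1) 2(1) uw] .
      moreover have "\<forall>x\<in>F. \<bar>(u *\<^sub>R b1 + w *\<^sub>R b2) x\<bar> < e"
      proof
        fix x assume x: "x \<in> F"
        have "u *\<^sub>R b1 x + w *\<^sub>R b2 x \<in> ball 0 e"
          using convexD[OF convex_ball[of 0 e], of "b1 x" "b2 x" u w] 1(2) 2(2) x uw by (simp add: dist_real_def)
        then show "\<bar>(u *\<^sub>R b1 + w *\<^sub>R b2) x\<bar> < e" by (simp add: dist_real_def)
      qed
      ultimately have "(u *\<^sub>R a1 + w *\<^sub>R a2) - a0 + (u *\<^sub>R b1 + w *\<^sub>R b2) \<in> D" by (rule Dmem)
      moreover have "u *\<^sub>R z1 + w *\<^sub>R z2 = (u *\<^sub>R a1 + w *\<^sub>R a2) - a0 + (u *\<^sub>R b1 + w *\<^sub>R b2)"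
      proof -
        have "u *\<^sub>R z1 + w *\<^sub>R z2 = (u *\<^sub>R a1 + w *\<^sub>R a2) - (u + w) *\<^sub>R a0 + (u *\<^sub>R b1 + w *\<^sub>R b2)"
          unfolding 1(3) 2(3) by (simp add: algebra_simps)
        then show ?thesis using uw(3) by simp
      qed
      ultimately show "u *\<^sub>R z1 + w *\<^sub>R z2 \<in> D" by simp
    qed
  next
    show "0 \<in> D" using Dsmall[of 0] e by simp
  next
    fix z :: "'a \<Rightarrow> real"
    obtain s where s: "s > 0" "\<forall>x\<in>F. \<bar>s * z x\<bar> < e" using small[of z] by auto
    then have "s *\<^sub>R z \<in> D" using Dsmall[of "s *\<^sub>R z"] by simp
    then show "\<exists>s>0. s *\<^sub>R z \<in> D" using s by blast
  qed
  interpret minkD D by fact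
  define q where "q = \<phi> - a0"
  have qD: "q \<notin> D"
  proof
    assume "q \<in> D"
    then obtain a b where h: "a \<in> A" "\<forall>x\<in>F. \<bar>b x\<bar> < e" "q = a - a0 + b" unfolding D_def by blast
    then have "b = \<phi> - a" unfolding q_def by (simp add: algebra_simps)
    then show False using far h by fastforce
  qed
  have "1 \<le> mink D q" using mink_ge1[OF qD] .
  then obtain G where G: "linear G" "\<And>z. G z \<le> mink D z" "1 \<le> G q"
    using HB[OF sublin_mink] by blast
  have van: "G h = 0" if h: "\<forall>x\<in>F. h x = 0" for h
  proof -
    have "mink D h \<le> 0" by (rule mink_zero_if) (use h e in \<open>intro Dsmall, simp\<close>)
    moreover have "mink D (-h) \<le> 0" by (rule mink_zero_if) (use h e in \<open>intro Dsmall, simp\<close>)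
    ultimately show ?thesis using G(2)[of h] G(2)[of "-h"] linear_neg[OF G(1), of h] by linarith
  qed
  define dl where "dl x = (\<lambda>y. if y = x then 1 else 0 :: real)" for x :: 'a
  define l where "l x = G (dl x)" for x
  have rep: "G g = (\<Sum>x\<in>F. l x * g x)" for g
  proof -
    define g' where "g' = (\<Sum>x\<in>F. g x *\<^sub>R dl x)"
    have "\<forall>y\<in>F. (g - g') y = 0"
    proof
      fix y assume y: "y \<in> F"
      have "g' y = (\<Sum>x\<in>F. if y = x then g x else 0)"
        unfolding g'_def sum_fun_apply by (rule sum.cong) (auto simp: dl_def)
      also have "\<dots> = g y" using F y by simp
      finally show "(g - g') y = 0" by simp
    qed
    then have "G (g - g') = 0" by (rule van)
    then have "G g = G g'" using linear_diff[OF G(1)] by simp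
    also have "G g' = (\<Sum>x\<in>F. g x * G (dl x))" unfolding g'_def
      by (simp only: linear_sum[OF G(1)] linear_scale[OF G(1)] real_scaleR_def)
    finally show ?thesis unfolding l_def by (simp add: mult.commute)
  qed
  have "(\<Sum>x\<in>F. l x * a x) < (\<Sum>x\<in>F. l x * \<phi> x)" if a: "a \<in> A" for a
  proof -
    obtain c where c: "c > 0" "\<forall>x\<in>F. \<bar>c * q x\<bar> < e" using small[of q] by auto
    have "a - a0 + c *\<^sub>R q \<in> D" using Dmem[OF a, of "c *\<^sub>R q"] c by simp
    then have "G (a - a0 + c *\<^sub>R q) \<le> 1" using G(2)[of "a - a0 + c *\<^sub>R q"] mink_le1 by (meson order_trans)
    then have "G (a - a0) + c * G q \<le> 1" using linear_add[OF G(1)] linear_scale[OF G(1)] by simp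
    moreover have "c \<le> c * G q" using G(3) c(1) mult_left_mono[of 1 "G q" c] by simp
    ultimately have "G (a - a0) < G q" using G(3) c(1) by linarith
    then have "G a < G \<phi>" unfolding q_def using linear_diff[OF G(1)] by simp
    then show ?thesis using rep by simp
  qed
  then show ?thesis by blast
qed


lemma dom_conj_iff:
  "\<psi> \<in> dom_conj f \<longleftrightarrow> \<psi> \<in> topdual \<and> (\<exists>k. \<forall>x. ereal (\<psi> x - k) \<le> f x)"
proof
  assume h: "\<psi> \<in> dom_conj f"
  then have t: "\<psi> \<in> topdual" "fconj f \<psi> < \<infinity>" unfolding dom_conj_def by auto
  obtain k where k: "fconj f \<psi> \<le> ereal k"
    using t(2) by (cases "fconj f \<psi>") auto
  have "ereal (\<psi> x - k) \<le> f x" for x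
  proof -
    have "ereal (\<psi> x) - f x \<le> fconj f \<psi>" unfolding fconj_def by (rule SUP_upper) simp
    then have le: "ereal (\<psi> x) - f x \<le> ereal k" using k by simp
    then show ?thesis by (cases "f x") auto
  qed
  then show "\<psi> \<in> topdual \<and> (\<exists>k. \<forall>x. ereal (\<psi> x - k) \<le> f x)" using t by blast
next
  assume h: "\<psi> \<in> topdual \<and> (\<exists>k. \<forall>x. ereal (\<psi> x - k) \<le> f x)"
  then obtain k where k: "\<And>x. ereal (\<psi> x - k) \<le> f x" by blast
  have "fconj f \<psi> \<le> ereal k" unfolding fconj_def
  proof (rule SUP_least)
    fix x
    show "ereal (\<psi> x) - f x \<le> ereal k" using k[of x] by (cases "f x") auto
  qed
  then show "\<psi> \<in> dom_conj f" using h unfolding dom_conj_def by auto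
qed

lemma dom_conj_convex: "convex (dom_conj f)"
proof (rule convexI)
  fix \<psi>1 \<psi>2 and u w :: real assume p: "\<psi>1 \<in> dom_conj f" "\<psi>2 \<in> dom_conj f" and uw: "0 \<le> u" "0 \<le> w" "u + w = 1"
  obtain k1 where k1: "\<psi>1 \<in> topdual" "\<And>x. ereal (\<psi>1 x - k1) \<le> f x" using p(1) dom_conj_iff by blast
  obtain k2 where k2: "\<psi>2 \<in> topdual" "\<And>x. ereal (\<psi>2 x - k2) \<le> f x" using p(2) dom_conj_iff by blast
  have eq: "u *\<^sub>R \<psi>1 + w *\<^sub>R \<psi>2 = (\<lambda>x. u * \<psi>1 x + w * \<psi>2 x)" by (simp add: fun_eq_iff)
  have "(\<lambda>x. u * \<psi>1 x + w * \<psi>2 x) \<in> topdual" by (intro topdual_add topdual_scale k1 k2)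
  moreover have "ereal ((u * \<psi>1 x + w * \<psi>2 x) - (u * k1 + w * k2)) \<le> f x" for x
  proof (cases "f x")
    case (real r)
    have "\<psi>1 x - k1 \<le> r" "\<psi>2 x - k2 \<le> r" using k1(2)[of x] k2(2)[of x] real by auto
    then have "u * (\<psi>1 x - k1) \<le> u * r" "w * (\<psi>2 x - k2) \<le> w * r" using uw by (auto intro: mult_left_mono)
    moreover have "u * r + w * r = r" using uw(3) by (metis distrib_right mult_1)
    ultimately show ?thesis using real by (simp add: algebra_simps)
  next
    case PInf then show ?thesis by simp
  next
    case MInf then show ?thesis using k1(2)[of x] by simp
  qed
  ultimately show "u *\<^sub>R \<psi>1 + w *\<^sub>R \<psi>2 \<in> dom_conj f" unfolding eq dom_conj_iff by blast
qed

lemma ereal_le_minus: "ereal a \<le> z \<Longrightarrow> ereal (a - b) \<le> z - ereal b"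
  by (cases z) auto

lemma ereal_less_minus: "ereal a < z - ereal b \<Longrightarrow> ereal (a + b) < z"
  by (cases z) auto

lemma coer_from_claim:
  assumes \<psi>: "\<psi> \<in> dom_conj f" and \<phi>0: "\<phi>0 \<in> topdual" and gt: "\<phi>0 u < \<psi> u"
  shows "((\<lambda>t. f (x + t *\<^sub>R u) - ereal (\<phi>0 (x + t *\<^sub>R u))) \<longlongrightarrow> \<infinity>) at_top"
proof -
  obtain k where k: "\<psi> \<in> topdual" "\<And>x. ereal (\<psi> x - k) \<le> f x" using \<psi> dom_conj_iff by blast
  define A where "A = \<psi> x - k - \<phi>0 x"
  define B where "B = \<psi> u - \<phi>0 u"
  have B: "B > 0" using gt unfolding B_def by simp
  have lb: "ereal (A + t * B) \<le> f (x + t *\<^sub>R u) - ereal (\<phi>0 (x + t *\<^sub>R u))" for t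
  proof -
    have "ereal (\<psi> (x + t *\<^sub>R u) - k - \<phi>0 (x + t *\<^sub>R u)) \<le> f (x + t *\<^sub>R u) - ereal (\<phi>0 (x + t *\<^sub>R u))"
      by (rule ereal_le_minus[OF k(2)])
    moreover have "\<psi> (x + t *\<^sub>R u) - k - \<phi>0 (x + t *\<^sub>R u) = A + t * B"
      using topdual_lin[OF k(1)] topdual_lin[OF \<phi>0] unfolding A_def B_def
      by (simp add: linear_add linear_scale algebra_simps)
    ultimately show ?thesis by simp
  qed
  show ?thesis
    unfolding tendsto_PInfty
  proof
    fix r :: real
    define N where "N = (r - A) / B + 1"
    have "ereal r < f (x + t *\<^sub>R u) - ereal (\<phi>0 (x + t *\<^sub>R u))" if t: "t \<ge> N" for t
    proof -
      have "N * B \<le> t * B" using t B by (intro mult_right_mono) auto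
      moreover have "N * B = r - A + B" unfolding N_def using B by (simp add: field_simps)
      ultimately have "r < A + t * B" using B by linarith
      then have "ereal r < ereal (A + t * B)" by simp
      then show ?thesis using lb[of t] by (rule less_le_trans)
    qed
    then show "\<forall>\<^sub>F t in at_top. ereal r < f (x + t *\<^sub>R u) - ereal (\<phi>0 (x + t *\<^sub>R u))"
      unfolding eventually_at_top_linorder by blast
  qed
qed

lemma claim_from_coer:
  fixes f :: "'a::{real_vector,topological_space} \<Rightarrow> ereal"
  assumes lc: "locally_convex_tvs TYPE('a)" and f: "f \<in> GammaX" and \<phi>0: "\<phi>0 \<in> topdual"
    and dc: "dir_coercive (\<lambda>x. f x - ereal (\<phi>0 x))" and u: "u \<noteq> 0"
  shows "\<exists>\<psi>\<in>dom_conj f. \<phi>0 u < \<psi> u"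
proof (rule ccontr)
  assume "\<not> ?thesis"
  then have H: "\<And>\<psi>. \<psi> \<in> dom_conj f \<Longrightarrow> \<psi> u \<le> \<phi>0 u" by force
  obtain x0 r0 where x0: "f x0 = ereal r0" using gamma_dom[OF f] by blast
  have "((\<lambda>t. f (x0 + t *\<^sub>R u) - ereal (\<phi>0 (x0 + t *\<^sub>R u))) \<longlongrightarrow> \<infinity>) at_top"
    using dc u unfolding dir_coercive_def by blast
  then have "\<forall>\<^sub>F t in at_top. ereal (r0 - \<phi>0 x0 + 1) < f (x0 + t *\<^sub>R u) - ereal (\<phi>0 (x0 + t *\<^sub>R u))"
    unfolding tendsto_PInfty by blast
  then obtain N where N: "\<And>t. t \<ge> N \<Longrightarrow> ereal (r0 - \<phi>0 x0 + 1) < f (x0 + t *\<^sub>R u) - ereal (\<phi>0 (x0 + t *\<^sub>R u))"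
    unfolding eventually_at_top_linorder by blast
  define t where "t = max N 0"
  have t: "t \<ge> 0" "t \<ge> N" unfolding t_def by auto
  define y where "y = x0 + t *\<^sub>R u"
  define \<alpha> where "\<alpha> = r0 + t * \<phi>0 u + 1"
  have "ereal (r0 - \<phi>0 x0 + 1 + \<phi>0 y) < f y" using ereal_less_minus[OF N[OF t(2)]] unfolding y_def .
  moreover have "\<phi>0 y = \<phi>0 x0 + t * \<phi>0 u" unfolding y_def using topdual_lin[OF \<phi>0]
    by (simp add: linear_add linear_scale)
  ultimately have ay: "ereal \<alpha> < f y" unfolding \<alpha>_def by (simp add: algebra_simps)
  obtain \<psi> c where m: "\<psi> \<in> topdual" "\<forall>x. ereal (\<psi> x + c) \<le> f x" "\<alpha> \<le> \<psi> y + c"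
    using AM[OF lc f ay] by blast
  have "\<psi> \<in> dom_conj f" unfolding dom_conj_iff using m(1,2) by (intro conjI exI[of _ "-c"]) auto
  then have "\<psi> u \<le> \<phi>0 u" by (rule H)
  moreover have "\<psi> x0 + c \<le> r0" using m(2)[rule_format, of x0] x0 by simp
  moreover have "\<psi> y = \<psi> x0 + t * \<psi> u" unfolding y_def using topdual_lin[OF m(1)]
    by (simp add: linear_add linear_scale)
  moreover have "t * \<psi> u \<le> t * \<phi>0 u" by (rule mult_left_mono[OF \<open>\<psi> u \<le> \<phi>0 u\<close> t(1)])
  ultimately show False using m(3) unfolding \<alpha>_def by linarith
qed

lemma wstar_closureD:
  assumes "\<phi> \<in> wstar_closure B" "e > 0"
  shows "\<exists>b\<in>B. \<bar>b u - \<phi> u\<bar> < e"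
proof -
  have "\<forall>F e. finite F \<and> e > 0 \<longrightarrow> (\<exists>b\<in>B. \<forall>x\<in>F. \<bar>b x - \<phi> x\<bar> < e)"
    using assms(1) unfolding wstar_closure_def by blast
  then have "\<exists>b\<in>B. \<forall>x\<in>{u}. \<bar>b x - \<phi> x\<bar> < e" using assms(2) by blast
  then show ?thesis by simp
qed

lemma claim_from_qi:
  fixes f :: "'a::{real_vector,t2_space} \<Rightarrow> ereal"
  assumes lc: "locally_convex_tvs TYPE('a)" and q: "\<phi>0 \<in> qi (wstar_closure (dom_conj f))" and u: "u \<noteq> 0"
  shows "\<exists>\<psi>\<in>dom_conj f. \<phi>0 u < \<psi> u"
proof -
  obtain k0 where k0: "k0 \<in> topdual" "k0 u > 0" using S1[OF lc u] by blast
  define C where "C = wstar_closure (dom_conj f)"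
  define K where "K = {(\<lambda>x. t * (c x - \<phi>0 x)) | t c. t \<ge> 0 \<and> c \<in> C}"
  have "wstar_closure K = topdual"
    using q unfolding qi_def K_def C_def by auto
  then have "k0 \<in> wstar_closure K" using k0 by simp
  then obtain b where b: "b \<in> K" "\<bar>b u - k0 u\<bar> < k0 u" using wstar_closureD k0(2) by blast
  then obtain t c where tc: "t \<ge> 0" "c \<in> C" "b = (\<lambda>x. t * (c x - \<phi>0 x))" unfolding K_def by blast
  have "t * (c u - \<phi>0 u) > 0" using b(2) tc(3) by auto
  then have cu: "c u - \<phi>0 u > 0" using tc(1) by (simp add: zero_less_mult_iff)
  obtain \<psi> where "\<psi> \<in> dom_conj f" "\<bar>\<psi> u - c u\<bar> < c u - \<phi>0 u"
    using wstar_closureD[OF tc(2)[unfolded C_def] cu] by blast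
  then show ?thesis by (intro bexI[of _ \<psi>]) auto
qed


lemma FD_vec:
  fixes A :: "('a::real_vector \<Rightarrow> real) set"
  assumes cvx: "convex A" and ne: "A \<noteq> {}" and lin: "\<And>a. a \<in> A \<Longrightarrow> linear a" and k: "linear k"
    and F: "finite F" and e: "e > 0" and far: "\<forall>a\<in>A. \<exists>x\<in>F. e \<le> \<bar>a x - k x\<bar>"
  shows "\<exists>u. \<forall>a\<in>A. a u < k u"
proof -
  obtain l where l: "\<forall>a\<in>A. (\<Sum>x\<in>F. l x * a x) < (\<Sum>x\<in>F. l x * k x)"
    using FD[OF cvx F e ne far] by blast
  define u where "u = (\<Sum>x\<in>F. l x *\<^sub>R x)"
  have ev: "g u = (\<Sum>x\<in>F. l x * g x)" if "linear g" for g
    unfolding u_def by (simp only: linear_sum[OF that] linear_scale[OF that] real_scaleR_def)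
  show ?thesis using l ev lin k by (intro exI[of _ u]) auto
qed

lemma wstar_closure_sub: "wstar_closure B \<subseteq> topdual" unfolding wstar_closure_def by auto

lemma wstar_closure_mono: "B \<subseteq> B' \<Longrightarrow> wstar_closure B \<subseteq> wstar_closure B'"
  unfolding wstar_closure_def by blast

lemma wstar_closure_inc: "B \<subseteq> topdual \<Longrightarrow> B \<subseteq> wstar_closure B"
  unfolding wstar_closure_def by force

lemma dom_conj_sub: "dom_conj f \<subseteq> topdual" unfolding dom_conj_def by auto

lemma qi_from_claim:
  fixes f :: "'a::{real_vector,topological_space} \<Rightarrow> ereal"
  assumes \<phi>0: "\<phi>0 \<in> topdual" and nt: "\<exists>v::'a. v \<noteq> 0"
    and cl: "\<And>u. u \<noteq> 0 \<Longrightarrow> \<exists>\<psi>\<in>dom_conj f. \<phi>0 u < \<psi> u"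
  shows "\<phi>0 \<in> qi (wstar_closure (dom_conj f))"
proof -
  have ne: "dom_conj f \<noteq> {}" using nt cl by blast
  have linD: "linear \<psi>" if "\<psi> \<in> dom_conj f" for \<psi> using that dom_conj_sub topdual_lin by blast
  have lin0: "linear \<phi>0" using topdual_lin[OF \<phi>0] .
  have C: "\<phi>0 \<in> wstar_closure (dom_conj f)"
    unfolding wstar_closure_def
  proof (intro CollectI conjI \<phi>0 allI impI)
    fix F :: "'a set" and e :: real assume Fe: "finite F \<and> e > 0"
    show "\<exists>b\<in>dom_conj f. \<forall>x\<in>F. \<bar>b x - \<phi>0 x\<bar> < e"
    proof (rule ccontr)
      assume "\<not> ?thesis"
      then have far: "\<forall>a\<in>dom_conj f. \<exists>x\<in>F. e \<le> \<bar>a x - \<phi>0 x\<bar>" by (auto simp: not_less)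
      obtain u where u: "\<forall>a\<in>dom_conj f. a u < \<phi>0 u"
        using FD_vec[OF dom_conj_convex ne linD lin0 _ _ far] Fe by blast
      have "u \<noteq> 0"
      proof
        assume "u = 0"
        obtain \<psi> where "\<psi> \<in> dom_conj f" using ne by blast
        then show False using u \<open>u = 0\<close> linear_0[OF linD[OF \<open>\<psi> \<in> dom_conj f\<close>]] linear_0[OF lin0] by force
      qed
      then show False using cl u by force
    qed
  qed
  define K' where "K' = {(\<lambda>x. t * (\<psi> x - \<phi>0 x)) | t \<psi>. t \<ge> 0 \<and> \<psi> \<in> dom_conj f}"
  define K where "K = {(\<lambda>x. t * (c x - \<phi>0 x)) | t c. t \<ge> 0 \<and> c \<in> wstar_closure (dom_conj f)}"
  have K'K: "K' \<subseteq> K" unfolding K'_def K_def using wstar_closure_inc[OF dom_conj_sub] by blast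
  have linK: "linear k" if kK: "k \<in> K'" for k
  proof -
    obtain t \<psi> where "\<psi> \<in> dom_conj f" "k = (\<lambda>x. t * (\<psi> x - \<phi>0 x))" using kK unfolding K'_def by blast
    then show ?thesis using linD lin0
      by (intro linearI) (simp_all add: linear_add linear_scale algebra_simps)
  qed
  have neK: "K' \<noteq> {}" using ne unfolding K'_def by blast
  have cvxK: "convex K'"
  proof (rule convexI)
    fix k1 k2 and u w :: real assume k: "k1 \<in> K'" "k2 \<in> K'" and uw: "0 \<le> u" "0 \<le> w" "u + w = 1"
    obtain t1 \<psi>1 where 1: "t1 \<ge> 0" "\<psi>1 \<in> dom_conj f" "k1 = (\<lambda>x. t1 * (\<psi>1 x - \<phi>0 x))" using k(1) unfolding K'_def by blast
    obtain t2 \<psi>2 where 2: "t2 \<ge> 0" "\<psi>2 \<in> dom_conj f" "k2 = (\<lambda>x. t2 * (\<psi>2 x - \<phi>0 x))" using k(2) unfolding K'_def by blast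
    define T where "T = u * t1 + w * t2"
    have T0: "T \<ge> 0" unfolding T_def using uw 1 2 by simp
    show "u *\<^sub>R k1 + w *\<^sub>R k2 \<in> K'"
    proof (cases "T = 0")
      case True
      then have "u * t1 = 0" "w * t2 = 0" unfolding T_def using uw 1 2
        by (smt (verit) mult_nonneg_nonneg)+
      then have e1: "\<And>a. u * (t1 * a) = 0" and e2: "\<And>a. w * (t2 * a) = 0"
        by (metis mult.assoc mult_zero_left)+
      have "u *\<^sub>R k1 + w *\<^sub>R k2 = (\<lambda>x. 0 * (\<psi>1 x - \<phi>0 x))"
        unfolding 1(3) 2(3) by (simp add: fun_eq_iff e1 e2)
      then show ?thesis unfolding K'_def using 1(2) by blast
    next
      case False
      then have T: "T > 0" using T0 by simp
      have "(u * t1 / T) *\<^sub>R \<psi>1 + (w * t2 / T) *\<^sub>R \<psi>2 \<in> dom_conj f"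
        using convexD[OF dom_conj_convex 1(2) 2(2), of "u * t1 / T" "w * t2 / T"] uw 1 2 T
        unfolding T_def by (simp add: add_divide_distrib[symmetric])
      moreover have "u *\<^sub>R k1 + w *\<^sub>R k2 = (\<lambda>x. T * (((u * t1 / T) *\<^sub>R \<psi>1 + (w * t2 / T) *\<^sub>R \<psi>2) x - \<phi>0 x))"
      proof -
        have "u * (t1 * (\<psi>1 x - \<phi>0 x)) + w * (t2 * (\<psi>2 x - \<phi>0 x))
            = T * ((u * t1 / T) * \<psi>1 x + (w * t2 / T) * \<psi>2 x - \<phi>0 x)" for x
        proof -
          have "T * ((u * t1 / T) * \<psi>1 x + (w * t2 / T) * \<psi>2 x - \<phi>0 x)
              = u * t1 * \<psi>1 x + w * t2 * \<psi>2 x - T * \<phi>0 x" using T by (simp add: field_simps)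
          also have "\<dots> = u * (t1 * (\<psi>1 x - \<phi>0 x)) + w * (t2 * (\<psi>2 x - \<phi>0 x))"
            unfolding T_def by (simp add: algebra_simps)
          finally show ?thesis by simp
        qed
        then show ?thesis unfolding 1(3) 2(3) fun_eq_iff by simp
      qed
      ultimately show ?thesis unfolding K'_def using T0 by blast
    qed
  qed
  have "(topdual :: ('a \<Rightarrow> real) set) \<subseteq> wstar_closure K'"
  proof
    fix k0 :: "'a \<Rightarrow> real" assume k0: "k0 \<in> topdual"
    show "k0 \<in> wstar_closure K'"
      unfolding wstar_closure_def
    proof (intro CollectI conjI k0 allI impI)
      fix F :: "'a set" and e :: real assume Fe: "finite F \<and> e > 0"
      show "\<exists>b\<in>K'. \<forall>x\<in>F. \<bar>b x - k0 x\<bar> < e"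
      proof (rule ccontr)
        assume "\<not> ?thesis"
        then have far: "\<forall>a\<in>K'. \<exists>x\<in>F. e \<le> \<bar>a x - k0 x\<bar>" by (auto simp: not_less)
        obtain u where u: "\<forall>a\<in>K'. a u < k0 u"
          using FD_vec[OF cvxK neK linK topdual_lin[OF k0] _ _ far] Fe by blast
        obtain \<psi>0 where \<psi>0: "\<psi>0 \<in> dom_conj f" using ne by blast
        have "(\<lambda>x. 0 * (\<psi>0 x - \<phi>0 x)) \<in> K'" unfolding K'_def using \<psi>0 by blast
        then have pos: "0 < k0 u" using u by force
        have "u \<noteq> 0" using pos linear_0[OF topdual_lin[OF k0]] by auto
        then obtain \<psi> where \<psi>: "\<psi> \<in> dom_conj f" "\<phi>0 u < \<psi> u" using cl by blast
        define t where "t = k0 u / (\<psi> u - \<phi>0 u)"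
        have t: "t \<ge> 0" unfolding t_def using pos \<psi>(2) by simp
        have "(\<lambda>x. t * (\<psi> x - \<phi>0 x)) \<in> K'" unfolding K'_def using t \<psi>(1) by blast
        then have "t * (\<psi> u - \<phi>0 u) < k0 u" using u by force
        moreover have "t * (\<psi> u - \<phi>0 u) = k0 u" unfolding t_def using \<psi>(2) by simp
        ultimately show False by simp
      qed
    qed
  qed
  then have "wstar_closure K = topdual"
    using wstar_closure_mono[OF K'K] wstar_closure_sub[of K] by blast
  then show ?thesis using C unfolding qi_def K_def by blast
qed

lemma main_equiv:
  fixes f :: "'a::{real_vector,t2_space} \<Rightarrow> ereal"
  assumes lc: "locally_convex_tvs TYPE('a)" and nt: "\<exists>x::'a. x \<noteq> 0" and f: "f \<in> GammaX"
    and \<phi>0: "\<phi>0 \<in> topdual"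
  shows "dir_coercive (\<lambda>x. f x - ereal (\<phi>0 x)) \<longleftrightarrow> \<phi>0 \<in> qi (wstar_closure (dom_conj f))"
proof
  assume "dir_coercive (\<lambda>x. f x - ereal (\<phi>0 x))"
  then show "\<phi>0 \<in> qi (wstar_closure (dom_conj f))"
    using qi_from_claim[OF \<phi>0 nt] claim_from_coer[OF lc f \<phi>0] by blast
next
  assume q: "\<phi>0 \<in> qi (wstar_closure (dom_conj f))"
  show "dir_coercive (\<lambda>x. f x - ereal (\<phi>0 x))"
    unfolding dir_coercive_def
  proof (intro allI impI)
    fix x u :: 'a assume u: "u \<noteq> 0"
    obtain \<psi> where "\<psi> \<in> dom_conj f" "\<phi>0 u < \<psi> u" using claim_from_qi[OF lc q u] by blast
    then show "((\<lambda>t. f (x + t *\<^sub>R u) - ereal (\<phi>0 (x + t *\<^sub>R u))) \<longlongrightarrow> \<infinity>) at_top"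
      using coer_from_claim \<phi>0 by blast
  qed
qed

theorem corollary11:
  fixes f :: "'a::{real_vector,t2_space} \<Rightarrow> ereal"
  assumes "locally_convex_tvs TYPE('a)"
    and "\<exists>x::'a. x \<noteq> 0"
    and "f \<in> GammaX"
  shows "(dir_coercive f \<longleftrightarrow> (\<lambda>x::'a. 0::real) \<in> qi (wstar_closure (dom_conj f)))
       \<and> (ess_dir_coercive f \<longleftrightarrow> qi (wstar_closure (dom_conj f)) \<noteq> {})"
proof
  have "(\<lambda>x. f x - ereal ((\<lambda>x::'a. 0::real) x)) = f" by (simp add: fun_eq_iff)
  then show "dir_coercive f \<longleftrightarrow> (\<lambda>x::'a. 0::real) \<in> qi (wstar_closure (dom_conj f))"
    using main_equiv[OF assms topdual_zero] by simp
next
  have sub: "qi (wstar_closure (dom_conj f)) \<subseteq> topdual"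
    unfolding qi_def using wstar_closure_sub by blast
  show "ess_dir_coercive f \<longleftrightarrow> qi (wstar_closure (dom_conj f)) \<noteq> {}"
    unfolding ess_dir_coercive_def using main_equiv[OF assms] sub by blast
qed


end
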